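(* In the setting and notation of the context, for every $x\in(-1,1)$, \[W(x)=V_-(x)V_-(x)^\ast=V_+(x)V_+(x)^\ast=\widehat V_-(x)\widehat V_-(x)^\ast=\widehat V_+(x)\widehat V_+(x)^\ast,\] where $V_\pm(x)=\lim_{\varepsilon\to0+}V(x\pm i\varepsilon)$ and $\widehat V_\pm(x)=\lim_{\varepsilon\to0+}\widehat V(x\pm i\varepsilon)$.
   Context: Fix $r\ge1$, $\alpha,\beta>-1$ and $H:[-1,1]\to\mathbb C^{r\times r}$ with $H(x)$ Hermitian positive definite for $x\in(-1,1)$, $H$ real analytic on $[-1,1]$, and $H(\pm1)$ not the zero matrix. Put $W(x)=(1-x)^\alpha(1+x)^\beta H(x)$. Fix a factorization $H(x)=Q(x)\Lambda(x)Q(x)^\ast$ on $[-1,1]$ with $Q(x)$ unitary, $\Lambda(x)=\mathrm{diag}(\lambda_1(x),\dots,\lambda_r(x))$, and $Q,\Lambda$ real analytic on $[-1,1]$ (such a choice exists by Rellich's theorem); $Q,\lambda_j$ also denote their analytic continuations to a convex complex neighborhood $N$ of $[-1,1]$ in which no $\lambda_j$ vanishes except possibly at $\pm1$. Let $n_j$ (resp. $m_j$) be the order of vanishing of $\lambda_j$ at $1$ (resp. $-1$), equal to $0$ if $\lambda_j$ does not vanish there. Set $\widetilde\lambda_j=(-1)^{n_j}\lambda_j$ (positive on $(1,1+\delta)$ for small $\delta>0$) and let $\widetilde\lambda_j^{1/2}$ be the analytic continuation to $N\setminus(-\infty,1]$ of its positive square root on $(1,1+\delta)$; define $V(z)=(z-1)^{\alpha/2}(z+1)^{\beta/2}Q(z)\,\mathrm{diag}(\widetilde\lambda_1(z)^{1/2},\dots,\widetilde\lambda_r(z)^{1/2})$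 on $N\setminus(-\infty,1]$ (principal branches). Similarly set $\widehat\lambda_j=(-1)^{m_j}\lambda_j$ (positive on $(-1-\delta,-1)$), let $\widehat\lambda_j^{1/2}$ be the analytic continuation to $N\setminus[-1,\infty)$ of its positive square root on $(-1-\delta,-1)$, and define $\widehat V(z)=(1-z)^{\alpha/2}(-1-z)^{\beta/2}Q(z)\,\mathrm{diag}(\widehat\lambda_1(z)^{1/2},\dots,\widehat\lambda_r(z)^{1/2})$ on $N\setminus[-1,\infty)$ (principal branches). *)

theory Defs
  imports "HOL-Complex_Analysis.Complex_Analysis"
begin

(* r x r complex matrices are rendered as complex^'n^'n with r = CARD('n) *)

definition mat_adj :: "complex^'n^'m \<Rightarrow> complex^'m^'n" where
  "mat_adj A = (\<chi> i j. cnj (A $ j $ i))"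

definition cdiag :: "('n \<Rightarrow> complex) \<Rightarrow> complex^'n^'n" where
  "cdiag d = (\<chi> i j. if i = j then d i else 0)"

definition cscale :: "complex \<Rightarrow> complex^'n^'m \<Rightarrow> complex^'n^'m" where
  "cscale c A = (\<chi> i j. c * A $ i $ j)"

definition unitary_mat :: "complex^'n^'n \<Rightarrow> bool" where
  "unitary_mat U \<longleftrightarrow> U ** mat_adj U = mat 1 \<and> mat_adj U ** U = mat 1"

definition herm_pos_def :: "complex^'n^'n \<Rightarrow> bool" where
  "herm_pos_def A \<longleftrightarrow> mat_adj A = A \<and>
     (\<forall>v::complex^'n. v \<noteq> 0 \<longrightarrow>
        (let q = (\<Sum>i\<in>UNIV. \<Sum>j\<in>UNIV. cnj (v $ i) * A $ i $ j * v $ j) in Im q = 0 \<and> Re q > 0))"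

definition vanish_order :: "(complex \<Rightarrow> complex) \<Rightarrow> complex \<Rightarrow> nat" where
  "vanish_order f z = nat (zorder f z)"

(* V(z) = (z-1)^(alpha/2) (z+1)^(beta/2) Q(z) diag(s_1(z),...,s_r(z)), principal branches *)
definition V_plus1 :: "real \<Rightarrow> real \<Rightarrow> (complex \<Rightarrow> complex^'n^'n) \<Rightarrow> ('n \<Rightarrow> complex \<Rightarrow> complex)
     \<Rightarrow> complex \<Rightarrow> complex^'n^'n" where
  "V_plus1 \<alpha> \<beta> Q s z =
     cscale ((z - 1) powr (of_real (\<alpha>/2)) * (z + 1) powr (of_real (\<beta>/2)))
            (Q z ** cdiag (\<lambda>j. s j z))"

(* hat V(z) = (1-z)^(alpha/2) (-1-z)^(beta/2) Q(z) diag(t_1(z),...,t_r(z)), principal branches *)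
definition V_minus1 :: "real \<Rightarrow> real \<Rightarrow> (complex \<Rightarrow> complex^'n^'n) \<Rightarrow> ('n \<Rightarrow> complex \<Rightarrow> complex)
     \<Rightarrow> complex \<Rightarrow> complex^'n^'n" where
  "V_minus1 \<alpha> \<beta> Q t z =
     cscale ((1 - z) powr (of_real (\<alpha>/2)) * (-1 - z) powr (of_real (\<beta>/2)))
            (Q z ** cdiag (\<lambda>j. t j z))"

definition bv_factor :: "(complex \<Rightarrow> complex^'n^'n) \<Rightarrow> real \<Rightarrow> real \<Rightarrow> complex^'n^'n \<Rightarrow> bool" where
  "bv_factor F sg x Wx \<longleftrightarrow>
     (\<exists>L. ((\<lambda>\<epsilon>::real. F (of_real x + of_real sg * \<i> * of_real \<epsilon>)) \<longlongrightarrow> L) (at_right 0)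
          \<and> Wx = L ** mat_adj L)"

end

theory Submission
  imports Defs
begin

lemma half_cases:
  fixes sg :: real
  assumes "sg = 1 \<or> sg = -1"
  shows "{z::complex. 0 < sg * Im z} = {z. Im z > 0} \<or> {z::complex. 0 < sg * Im z} = {z. Im z < 0}"
  using assms by (auto simp: mult_less_0_iff)

lemma half_open_convex:
  fixes sg :: real
  assumes "sg = 1 \<or> sg = -1"
  shows "open {z::complex. 0 < sg * Im z}" "convex {z::complex. 0 < sg * Im z}"
  using half_cases[OF assms] by (auto simp: open_halfspace_Im_gt open_halfspace_Im_lt
      convex_halfspace_Im_gt convex_halfspace_Im_lt)

lemma ident_half:
  fixes N R :: "complex set" and g :: "complex \<Rightarrow> complex" and q \<rho> sg :: real
  assumes N: "open N" "convex N" and g: "g holomorphic_on (N - R)" and R: "R \<subseteq> \<real>"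
    and \<rho>: "\<rho> > 0" "ball (complex_of_real q) \<rho> \<subseteq> N" "ball (complex_of_real q) \<rho> \<inter> R = {}"
    and g0: "\<And>y. of_real y \<in> ball (complex_of_real q) \<rho> \<Longrightarrow> g (of_real y) = 0"
    and sg: "sg = 1 \<or> sg = -1"
    and z: "z \<in> N" "0 < sg * Im z"
  shows "g z = 0"
proof -
  define S where "S = (N \<inter> {z. 0 < sg * Im z}) \<union> ball (complex_of_real q) \<rho>"
  have SR: "S \<subseteq> N - R"
  proof
    fix w assume "w \<in> S"
    then have "w \<in> N \<inter> {z. 0 < sg * Im z} \<or> w \<in> ball (complex_of_real q) \<rho>" by (simp add: S_def)
    then show "w \<in> N - R"
    proof (elim disjE)
      assume "w \<in> N \<inter> {z. 0 < sg * Im z}"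
      then have "Im w \<noteq> 0" by auto
      then have "w \<notin> \<real>" using complex_is_Real_iff by blast
      then show ?thesis using R \<open>w \<in> N \<inter> _\<close> by auto
    next
      assume "w \<in> ball (complex_of_real q) \<rho>" then show ?thesis using \<rho> by auto
    qed
  qed
  have oS: "open S" unfolding S_def using N half_open_convex[OF sg] by auto
  define p where "p = of_real q + \<i> * of_real (sg * \<rho> / 2)"
  have pb: "p \<in> ball (complex_of_real q) \<rho>" using \<rho> sg by (auto simp: p_def dist_norm norm_mult)
  have pH: "0 < sg * Im p" using \<rho> sg by (auto simp: p_def)
  have cS: "connected S" unfolding S_def
  proof (rule connected_Un)
    show "connected (N \<inter> {z. 0 < sg * Im z})"
      using N half_open_convex[OF sg] by (intro convex_connected convex_Int) auto
    show "connected (ball (complex_of_real q) \<rho>)" by simp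
    show "N \<inter> {z. 0 < sg * Im z} \<inter> ball (complex_of_real q) \<rho> \<noteq> {}"
      using pb pH \<rho> by blast
  qed
  define U where "U = complex_of_real ` {q - \<rho>/2 <..< q + \<rho>/2}"
  have US: "U \<subseteq> S"
    unfolding U_def S_def by (auto simp: dist_norm abs_less_iff simp flip: of_real_diff)
  have qS: "of_real q \<in> S" using \<rho> by (auto simp: S_def)
  have lim: "of_real q islimpt U"
  proof (rule islimpt_approachable[THEN iffD2], intro allI impI)
    fix e :: real assume e: "e > 0"
    define y where "y = q + min e \<rho> / 4"
    have "y \<in> {q - \<rho>/2 <..< q + \<rho>/2}" using e \<rho> by (auto simp: y_def)
    then have "complex_of_real y \<in> U" by (auto simp: U_def)
    moreover have "complex_of_real y \<noteq> of_real q" using e \<rho> by (auto simp: y_def)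
    moreover have "dist (complex_of_real y) (complex_of_real q) < e" using e \<rho>
      by (auto simp: y_def dist_norm simp flip: of_real_diff)
    ultimately show "\<exists>x'\<in>U. x' \<noteq> of_real q \<and> dist x' (complex_of_real q) < e" by blast
  qed
  have U0: "\<And>w. w \<in> U \<Longrightarrow> g w = 0"
  proof -
    fix w assume "w \<in> U"
    then obtain y where "w = of_real y" "y \<in> {q - \<rho>/2 <..< q + \<rho>/2}" by (auto simp: U_def)
    moreover have "of_real y \<in> ball (complex_of_real q) \<rho>" using calculation
      by (auto simp: dist_norm simp flip: of_real_diff)
    ultimately show "g w = 0" using g0 by auto
  qed
  have zS: "z \<in> S" using z by (auto simp: S_def)
  show ?thesis
    by (rule analytic_continuation[OF holomorphic_on_subset[OF g SR] oS cS US qS lim U0 zS])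
qed

lemma path_tendsto:
  fixes x0 :: complex and sg :: real
  shows "((\<lambda>\<epsilon>::real. x0 + of_real sg * \<i> * of_real \<epsilon>) \<longlongrightarrow> x0) (at_right 0)"
proof -
  have "((\<lambda>\<epsilon>::real. x0 + of_real sg * \<i> * of_real \<epsilon>) \<longlongrightarrow> x0 + of_real sg * \<i> * of_real 0) (at_right 0)"
    by (intro tendsto_intros)
  then show ?thesis by simp
qed

lemma path_eventually:
  fixes x0 :: complex and sg r :: real
  assumes "r > 0" "sg = 1 \<or> sg = -1"
  shows "eventually (\<lambda>\<epsilon>::real. x0 + of_real sg * \<i> * of_real \<epsilon> \<in> ball x0 r \<and>
            0 < sg * Im (x0 + of_real sg * \<i> * of_real \<epsilon>) - sg * Im x0) (at_right 0)"
proof -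
  have "eventually (\<lambda>\<epsilon>::real. 0 < \<epsilon> \<and> \<epsilon> < r) (at_right 0)"
    using assms(1) by (intro eventually_conj eventually_at_right_less) (auto simp: eventually_at_right_field intro: exI[of _ r])
  then show ?thesis
    by eventually_elim (use assms in \<open>auto simp: dist_norm norm_mult\<close>)
qed

lemma sqrt_bv:
  fixes N :: "complex set" and lam s :: "complex \<Rightarrow> complex" and c :: complex and x sg :: real
  assumes N: "open N" "complex_of_real x \<in> N" and lamc: "continuous_on N lam"
    and lamx: "lam (of_real x) \<in> \<real>" "Re (lam (of_real x)) > 0"
    and sc: "continuous_on (N \<inter> {z. 0 < sg * Im z}) s"
    and sq: "\<And>z. z \<in> N \<Longrightarrow> 0 < sg * Im z \<Longrightarrow> s z ^ 2 = c * lam z"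
    and c: "cmod c = 1" and sg: "sg = 1 \<or> sg = -1"
  shows "\<exists>L. ((\<lambda>\<epsilon>::real. s (of_real x + of_real sg * \<i> * of_real \<epsilon>)) \<longlongrightarrow> L) (at_right 0)
           \<and> (cmod L)^2 = Re (lam (of_real x))"
proof -
  define x0 where "x0 = complex_of_real x"
  have cont: "isCont lam x0"
    using lamc N by (simp add: x0_def continuous_on_eq_continuous_at)
  have "eventually (\<lambda>z. Re (lam z) > 0) (nhds x0)"
  proof -
    have "((\<lambda>z. Re (lam z)) \<longlongrightarrow> Re (lam x0)) (nhds x0)"
      using cont by (intro tendsto_intros) (simp add: isCont_def continuous_at_imp_continuous_at_within tendsto_nhds_iff
          Lim_at_imp_Lim_at_within isCont_tendsto_compose)
    then show ?thesis using lamx by (auto simp: x0_def dest: order_tendstoD)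
  qed
  then obtain d where d: "d > 0" "\<And>z. dist z x0 < d \<Longrightarrow> Re (lam z) > 0"
    by (auto simp: eventually_nhds_metric)
  obtain d' where d': "d' > 0" "ball x0 d' \<subseteq> N"
    using N by (auto simp: x0_def open_contains_ball)
  define r where "r = min d d'"
  have r: "r > 0" using d d' by (simp add: r_def)
  define B where "B = ball x0 r \<inter> {z. 0 < sg * Im z}"
  have BN: "B \<subseteq> N \<inter> {z. 0 < sg * Im z}" using d' by (auto simp: B_def r_def)
  have Bpos: "\<And>z. z \<in> B \<Longrightarrow> Re (lam z) > 0" using d by (auto simp: B_def r_def dist_commute)
  have Bnp: "\<And>z. z \<in> B \<Longrightarrow> lam z \<notin> \<real>\<^sub>\<le>\<^sub>0"
    using Bpos by (fastforce simp: complex_nonpos_Reals_iff)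
  have cB: "connected B" unfolding B_def
    using half_open_convex[OF sg] by (intro convex_connected convex_Int) auto
  define h where "h z = csqrt (lam z)" for z
  have hc: "continuous_on B h" unfolding h_def
    using Bnp BN continuous_on_subset[OF lamc]
    by (intro continuous_on_compose2[OF continuous_on_csqrt, of _ lam]) auto
  have hnz: "\<And>z. z \<in> B \<Longrightarrow> h z \<noteq> 0" using Bpos by (force simp: h_def)
  define k where "k z = s z / h z" for z
  have kc: "continuous_on B k" unfolding k_def
    using hc hnz continuous_on_subset[OF sc BN] by (intro continuous_intros) auto
  have ksq: "\<And>z. z \<in> B \<Longrightarrow> k z ^ 2 = c"
  proof -
    fix z assume z: "z \<in> B"
    have zN: "z \<in> N" and zH: "0 < sg * Im z" using z BN by auto
    have "k z ^ 2 = s z ^ 2 / h z ^ 2" by (simp add: k_def power_divide)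
    also have "\<dots> = c * lam z / lam z" using sq[OF zN zH] by (simp add: h_def)
    also have "\<dots> = c" using Bpos[OF z] by (auto)
    finally show "k z ^ 2 = c" .
  qed
  have "k ` B \<subseteq> {csqrt c, - csqrt c}"
  proof
    fix w assume "w \<in> k ` B"
    then obtain z where "z \<in> B" "w = k z" by auto
    then have "w ^ 2 = csqrt c ^ 2" using ksq by simp
    then have "w = csqrt c \<or> w = - csqrt c" by (rule power2_eq_iff[THEN iffD1])
    then show "w \<in> {csqrt c, - csqrt c}" by auto
  qed
  then have "finite (k ` B)" by (rule finite_subset) simp
  then have "k constant_on B" by (rule continuous_finite_range_constant[OF cB kc])
  then obtain a where a: "\<And>z. z \<in> B \<Longrightarrow> k z = a" by (auto simp: constant_on_def)
  define p where "p = x0 + of_real sg * \<i> * of_real (r/2)"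
  have pB: "p \<in> B" using r sg by (auto simp: B_def p_def dist_norm norm_mult x0_def)
  have asq: "a ^ 2 = c" using ksq[OF pB] a[OF pB] by simp
  have sB: "\<And>z. z \<in> B \<Longrightarrow> s z = a * h z"
    using a hnz by (auto simp: k_def field_simps)
  have ev: "eventually (\<lambda>\<epsilon>::real. s (x0 + of_real sg * \<i> * of_real \<epsilon>) = a * h (x0 + of_real sg * \<i> * of_real \<epsilon>)) (at_right 0)"
    using path_eventually[OF r sg, of x0]
  proof eventually_elim
    case (elim \<epsilon>)
    then have "x0 + of_real sg * \<i> * of_real \<epsilon> \<in> B" by (auto simp: B_def x0_def)
    then show ?case by (rule sB)
  qed
  have hcont: "isCont h x0" unfolding h_def
  proof (rule isCont_o2[OF cont continuous_at_csqrt])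
    show "lam x0 \<notin> \<real>\<^sub>\<le>\<^sub>0" using lamx by (auto simp: x0_def complex_nonpos_Reals_iff)
  qed
  have "((\<lambda>\<epsilon>::real. a * h (x0 + of_real sg * \<i> * of_real \<epsilon>)) \<longlongrightarrow> a * h x0) (at_right 0)"
    by (intro tendsto_intros isCont_tendsto_compose[OF hcont path_tendsto])
  then have lim: "((\<lambda>\<epsilon>::real. s (x0 + of_real sg * \<i> * of_real \<epsilon>)) \<longlongrightarrow> a * h x0) (at_right 0)"
    using ev by (simp add: tendsto_cong)
  have "(cmod (a * h x0))^2 = Re (lam x0)"
  proof -
    have ca: "cmod a ^ 2 = 1" using asq c by (metis norm_power)
    have "(cmod (a * h x0))^2 = cmod a ^ 2 * cmod (h x0) ^ 2" by (simp add: norm_mult power_mult_distrib)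
    also have "\<dots> = cmod (lam x0)" using ca by (simp add: h_def)
    also have "\<dots> = Re (lam x0)" using lamx by (auto simp: x0_def complex_is_Real_iff cmod_eq_Re)
    finally show ?thesis .
  qed
  then show ?thesis using lim by (auto simp: x0_def)
qed

lemma powr_bv:
  fixes u sg a :: real
  assumes u: "u \<noteq> 0" and sg: "sg = 1 \<or> sg = -1"
  shows "\<exists>L. ((\<lambda>\<epsilon>::real. (complex_of_real u + of_real sg * \<i> * of_real \<epsilon>) powr (of_real a)) \<longlongrightarrow> L) (at_right 0)
           \<and> cmod L = \<bar>u\<bar> powr a"
proof (cases "u > 0")
  case True
  have "((\<lambda>\<epsilon>::real. (complex_of_real u + of_real sg * \<i> * of_real \<epsilon>) powr (of_real a)) \<longlongrightarrow>
      (complex_of_real u) powr (of_real a)) (at_right 0)"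
    by (rule tendsto_powr_complex[OF _ path_tendsto tendsto_const]) (use True in \<open>auto simp: complex_nonpos_Reals_iff\<close>)
  moreover have "cmod ((complex_of_real u) powr (of_real a)) = \<bar>u\<bar> powr a"
    by (simp add: norm_powr_real_powr')
  ultimately show ?thesis by blast
next
  case False
  with u have u: "u < 0" by simp
  define E where "E = exp (of_real a * (of_real sg * \<i> * of_real pi))"
  have ev: "eventually (\<lambda>\<epsilon>::real. (complex_of_real u + of_real sg * \<i> * of_real \<epsilon>) powr (of_real a) =
      (complex_of_real (-u) - of_real sg * \<i> * of_real \<epsilon>) powr (of_real a) * E) (at_right 0)"
    using eventually_at_right_less[of 0]
  proof eventually_elim
    case (elim \<epsilon>)
    define w' where "w' = complex_of_real (-u) - of_real sg * \<i> * of_real \<epsilon>"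
    have w'0: "w' \<noteq> 0" using u by (auto simp: w'_def complex_eq_iff)
    have w0: "- w' \<noteq> 0" using w'0 by simp
    have Ln: "Ln (- w') = Ln w' + of_real sg * \<i> * of_real pi"
      using Ln_minus[OF w'0] sg elim u by (auto simp: w'_def)
    have eq: "complex_of_real u + of_real sg * \<i> * of_real \<epsilon> = - w'" by (simp add: w'_def)
    have "(- w') powr (of_real a) = exp (of_real a * Ln (- w'))" using w0 by (simp add: powr_def)
    also have "\<dots> = exp (of_real a * Ln w') * E" by (simp add: Ln E_def distrib_left exp_add)
    also have "\<dots> = w' powr (of_real a) * E" using w'0 by (simp add: powr_def)
    finally show ?case unfolding eq by (simp add: w'_def)
  qed
  have "((\<lambda>\<epsilon>::real. (complex_of_real (-u) - of_real sg * \<i> * of_real \<epsilon>) powr (of_real a) * E) \<longlongrightarrow>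
      (complex_of_real (-u)) powr (of_real a) * E) (at_right 0)"
  proof (intro tendsto_mult tendsto_const tendsto_powr_complex)
    show "complex_of_real (-u) \<notin> \<real>\<^sub>\<le>\<^sub>0" using u by (auto simp: complex_nonpos_Reals_iff)
    have "((\<lambda>\<epsilon>::real. complex_of_real (-u) + of_real (-sg) * \<i> * of_real \<epsilon>) \<longlongrightarrow> complex_of_real (-u)) (at_right 0)"
      by (rule path_tendsto)
    then show "((\<lambda>\<epsilon>::real. complex_of_real (-u) - of_real sg * \<i> * of_real \<epsilon>) \<longlongrightarrow> complex_of_real (-u)) (at_right 0)"
      by simp
  qed
  then have lim: "((\<lambda>\<epsilon>::real. (complex_of_real u + of_real sg * \<i> * of_real \<epsilon>) powr (of_real a)) \<longlongrightarrow>
      (complex_of_real (-u)) powr (of_real a) * E) (at_right 0)"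
    using ev by (simp add: tendsto_cong)
  have "cmod E = 1" by (simp add: E_def norm_exp_eq_Re)
  then have "cmod ((complex_of_real (-u)) powr (of_real a) * E) = \<bar>u\<bar> powr a"
    by (simp add: norm_mult norm_powr_real_powr')
  with lim show ?thesis by blast
qed

lemma cdiag_mul_entry: "(A ** cdiag d) $ i $ j = A $ i $ j * d j"
  by (simp add: cdiag_def matrix_matrix_mult_def if_distrib cong: if_cong)

lemma lam_pos:
  fixes Hm Q :: "complex^'n^'n"
  assumes hp: "herm_pos_def Hm" and U: "unitary_mat Q" and fact: "Hm = Q ** cdiag d ** mat_adj Q"
  shows "d j \<in> \<real> \<and> Re (d j) > 0"
proof -
  define v where "v = (\<chi> i. Q $ i $ j)"
  have UQ: "mat_adj Q ** Q = mat 1" using U by (simp add: unitary_mat_def)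
  have "v \<noteq> 0"
  proof
    assume "v = 0"
    then have "\<And>i. Q $ i $ j = 0" by (metis v_def vec_lambda_beta zero_index)
    then have "(mat_adj Q ** Q) $ j $ j = 0" by (simp add: matrix_matrix_mult_def mat_adj_def)
    then show False using UQ by (simp add: mat_def)
  qed
  define q where "q = (\<Sum>i\<in>UNIV. \<Sum>k\<in>UNIV. cnj (v $ i) * Hm $ i $ k * v $ k)"
  have q: "Im q = 0 \<and> Re q > 0" using hp \<open>v \<noteq> 0\<close> by (auto simp: herm_pos_def_def q_def Let_def)
  have "q = (mat_adj Q ** Hm ** Q) $ j $ j"
    by (simp add: q_def v_def matrix_matrix_mult_def mat_adj_def sum_distrib_left sum_distrib_right
        mult.assoc mult.left_commute) (rule sum.swap)
  also have "mat_adj Q ** Hm ** Q = cdiag d"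
  proof -
    have "mat_adj Q ** Hm ** Q = (mat_adj Q ** Q) ** cdiag d ** (mat_adj Q ** Q)"
      by (simp add: fact matrix_mul_assoc)
    then show ?thesis using UQ by simp
  qed
  finally have "q = d j" by (simp add: cdiag_def)
  then show ?thesis using q by (auto simp: complex_is_Real_iff)
qed

lemma bv_generic:
  fixes F :: "complex \<Rightarrow> complex^'n^'n" and Q :: "complex \<Rightarrow> complex^'n^'n"
    and f :: "complex \<Rightarrow> complex" and s d :: "'n \<Rightarrow> complex" and sf :: "'n \<Rightarrow> complex \<Rightarrow> complex"
    and x sg A :: real
  assumes F: "\<And>z. F z = cscale (f z) (Q z ** cdiag (\<lambda>j. sf j z))"
    and fl: "((\<lambda>\<epsilon>::real. f (of_real x + of_real sg * \<i> * of_real \<epsilon>)) \<longlongrightarrow> fL) (at_right 0)"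
    and fA: "cmod fL ^ 2 = A"
    and sl: "\<And>j. ((\<lambda>\<epsilon>::real. sf j (of_real x + of_real sg * \<i> * of_real \<epsilon>)) \<longlongrightarrow> sL j) (at_right 0)"
    and sd: "\<And>j. d j \<in> \<real> \<and> cmod (sL j) ^ 2 = Re (d j)"
    and Qc: "\<And>i j. isCont (\<lambda>z. Q z $ i $ j) (of_real x)"
    and Hm: "Hm = Q (of_real x) ** cdiag d ** mat_adj (Q (of_real x))"
  shows "bv_factor F sg x (A *\<^sub>R Hm)"
proof -
  define x0 where "x0 = complex_of_real x"
  define L :: "complex^'n^'n" where "L = (\<chi> i j. fL * (Q x0 $ i $ j * sL j))"
  have comp: "F z $ i $ j = f z * (Q z $ i $ j * sf j z)" for z i j
    by (simp add: F cscale_def cdiag_mul_entry)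
  have lim: "((\<lambda>\<epsilon>::real. F (of_real x + of_real sg * \<i> * of_real \<epsilon>)) \<longlongrightarrow> L) (at_right 0)"
  proof (intro vec_tendstoI)
    fix i j
    have "((\<lambda>\<epsilon>::real. f (x0 + of_real sg * \<i> * of_real \<epsilon>) * (Q (x0 + of_real sg * \<i> * of_real \<epsilon>) $ i $ j *
            sf j (x0 + of_real sg * \<i> * of_real \<epsilon>))) \<longlongrightarrow> fL * (Q x0 $ i $ j * sL j)) (at_right 0)"
      using fl sl[of j] Qc[of i j]
      by (intro tendsto_mult isCont_tendsto_compose[OF _ path_tendsto]) (auto simp: x0_def)
    then show "((\<lambda>\<epsilon>::real. F (of_real x + of_real sg * \<i> * of_real \<epsilon>) $ i $ j) \<longlongrightarrow> L $ i $ j) (at_right 0)"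
      by (simp add: comp L_def x0_def)
  qed
  have eq: "A *\<^sub>R Hm = L ** mat_adj L"
  proof (intro vec_eq_iff[THEN iffD2] allI)
    fix i k
    have dj: "d j = sL j * cnj (sL j)" for j
    proof -
      have "d j = of_real (Re (d j))" using sd[of j] by (simp add: complex_is_Real_iff complex_eq_iff)
      also have "\<dots> = of_real ((cmod (sL j))^2)" using sd[of j] by simp
      finally show ?thesis by (simp only: complex_norm_square)
    qed
    have fA': "complex_of_real A = fL * cnj fL" using fA complex_norm_square[of fL] by simp
    have "(A *\<^sub>R Hm) $ i $ k = A *\<^sub>R (Hm $ i $ k)" by simp
    also have "\<dots> = of_real A * (\<Sum>j\<in>UNIV. Q x0 $ i $ j * d j * cnj (Q x0 $ k $ j))"
      by (simp add: Hm x0_def scaleR_conv_of_real matrix_matrix_mult_def mat_adj_def cdiag_mul_entry[unfolded matrix_matrix_mult_def, simplified])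
    also have "\<dots> = (L ** mat_adj L) $ i $ k"
      by (simp add: L_def matrix_matrix_mult_def mat_adj_def sum_distrib_left dj fA' mult_ac)
    finally show "(A *\<^sub>R Hm) $ i $ k = (L ** mat_adj L) $ i $ k" .
  qed
  show ?thesis unfolding bv_factor_def using lim eq by blast
qed

lemma side_plus:
  fixes N :: "complex set" and \<delta> :: real
  assumes N: "open N" "complex_of_real 1 \<in> N" and d: "\<delta> > 0" and P: "\<forall>y\<in>{1<..<1+\<delta>}. P y"
  shows "\<exists>q \<rho>. \<rho> > 0 \<and> ball (complex_of_real q) \<rho> \<subseteq> N \<and>
     ball (complex_of_real q) \<rho> \<inter> {z. z \<in> \<real> \<and> Re z \<le> 1} = {} \<and>
     (\<forall>y. complex_of_real y \<in> ball (complex_of_real q) \<rho> \<longrightarrow> P y)"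
proof -
  obtain e where e: "e > 0" "ball (complex_of_real 1) e \<subseteq> N" using N by (auto simp: open_contains_ball)
  define \<eta> where "\<eta> = min e \<delta> / 2"
  have \<eta>: "\<eta> > 0" "\<eta> \<le> e/2" "\<eta> \<le> \<delta>/2" using e d by (auto simp: \<eta>_def)
  define q where "q = 1 + \<eta>"
  have "ball (complex_of_real q) (\<eta>/2) \<subseteq> N"
  proof
    fix z assume "z \<in> ball (complex_of_real q) (\<eta>/2)"
    then have "dist (complex_of_real q) z < \<eta>/2" by simp
    moreover have "dist (complex_of_real 1) (complex_of_real q) = \<eta>"
      using \<eta> by (simp add: q_def dist_norm flip: of_real_diff)
    ultimately have "dist (complex_of_real 1) z < e" using dist_triangle[of "complex_of_real 1" z "complex_of_real q"] \<eta>
      by linarith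
    then show "z \<in> N" using e by auto
  qed
  moreover have "ball (complex_of_real q) (\<eta>/2) \<inter> {z. z \<in> \<real> \<and> Re z \<le> 1} = {}"
  proof -
    have False if "z \<in> ball (complex_of_real q) (\<eta>/2)" "Re z \<le> 1" for z
    proof -
      have "cmod (complex_of_real q - z) < \<eta>/2" using that by (simp add: dist_norm)
      moreover have "\<bar>Re (complex_of_real q - z)\<bar> \<le> cmod (complex_of_real q - z)" by (rule abs_Re_le_cmod)
      ultimately show False using that \<eta> by (auto simp: q_def)
    qed
    then show ?thesis by blast
  qed
  moreover have "\<forall>y. complex_of_real y \<in> ball (complex_of_real q) (\<eta>/2) \<longrightarrow> P y"
  proof (intro allI impI)
    fix y assume "complex_of_real y \<in> ball (complex_of_real q) (\<eta>/2)"
    then have qy: "\<bar>q - y\<bar> < \<eta>/2" by (simp add: dist_norm flip: of_real_diff)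
    then have "y \<in> {1<..<1+\<delta>}" using abs_less_iff[THEN iffD1, OF qy] \<eta> by (auto simp: q_def)
    then show "P y" using P by blast
  qed
  ultimately show ?thesis using \<eta> by (intro exI[of _ q] exI[of _ "\<eta>/2"]) auto
qed

lemma side_minus:
  fixes N :: "complex set" and \<delta> :: real
  assumes N: "open N" "complex_of_real (-1) \<in> N" and d: "\<delta> > 0" and P: "\<forall>y\<in>{-1-\<delta><..<-1}. P y"
  shows "\<exists>q \<rho>. \<rho> > 0 \<and> ball (complex_of_real q) \<rho> \<subseteq> N \<and>
     ball (complex_of_real q) \<rho> \<inter> {z. z \<in> \<real> \<and> Re z \<ge> -1} = {} \<and>
     (\<forall>y. complex_of_real y \<in> ball (complex_of_real q) \<rho> \<longrightarrow> P y)"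
proof -
  obtain e where e: "e > 0" "ball (complex_of_real (-1)) e \<subseteq> N" using N by (auto simp: open_contains_ball)
  define \<eta> where "\<eta> = min e \<delta> / 2"
  have \<eta>: "\<eta> > 0" "\<eta> \<le> e/2" "\<eta> \<le> \<delta>/2" using e d by (auto simp: \<eta>_def)
  define q where "q = -1 - \<eta>"
  have "ball (complex_of_real q) (\<eta>/2) \<subseteq> N"
  proof
    fix z assume "z \<in> ball (complex_of_real q) (\<eta>/2)"
    then have "dist (complex_of_real q) z < \<eta>/2" by simp
    moreover have "dist (complex_of_real (-1)) (complex_of_real q) = \<eta>"
    proof -
      have "complex_of_real (-1) - complex_of_real q = complex_of_real \<eta>" by (simp add: q_def)
      then show ?thesis using \<eta> by (simp add: dist_norm)
    qed
    ultimately have "dist (complex_of_real (-1)) z < e" using dist_triangle[of "complex_of_real (-1)" z "complex_of_real q"] \<eta>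
      by linarith
    then show "z \<in> N" using e by auto
  qed
  moreover have "ball (complex_of_real q) (\<eta>/2) \<inter> {z. z \<in> \<real> \<and> Re z \<ge> -1} = {}"
  proof -
    have False if "z \<in> ball (complex_of_real q) (\<eta>/2)" "Re z \<ge> -1" for z
    proof -
      have "cmod (complex_of_real q - z) < \<eta>/2" using that by (simp add: dist_norm)
      moreover have "\<bar>Re (complex_of_real q - z)\<bar> \<le> cmod (complex_of_real q - z)" by (rule abs_Re_le_cmod)
      ultimately show False using that \<eta> by (auto simp: q_def)
    qed
    then show ?thesis by blast
  qed
  moreover have "\<forall>y. complex_of_real y \<in> ball (complex_of_real q) (\<eta>/2) \<longrightarrow> P y"
  proof (intro allI impI)
    fix y assume "complex_of_real y \<in> ball (complex_of_real q) (\<eta>/2)"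
    then have qy: "\<bar>q - y\<bar> < \<eta>/2" by (simp add: dist_norm flip: of_real_diff)
    then have "y \<in> {-1-\<delta><..<-1}" using abs_less_iff[THEN iffD1, OF qy] \<eta> by (auto simp: q_def)
    then show "P y" using P by blast
  qed
  ultimately show ?thesis using \<eta> by (intro exI[of _ q] exI[of _ "\<eta>/2"]) auto
qed

lemma pow_half_sq: "((y::real) powr (a/2))^2 = y powr a"
  by (simp add: power2_eq_square flip: powr_add)

lemma pref_plus:
  fixes x sg \<alpha> \<beta> :: real
  assumes x: "x \<in> {-1<..<1}" and sg: "sg = 1 \<or> sg = -1"
  shows "\<exists>fL. ((\<lambda>\<epsilon>::real. (complex_of_real x + of_real sg * \<i> * of_real \<epsilon> - 1) powr of_real (\<alpha>/2) *
              (complex_of_real x + of_real sg * \<i> * of_real \<epsilon> + 1) powr of_real (\<beta>/2)) \<longlongrightarrow> fL) (at_right 0)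
        \<and> cmod fL ^ 2 = (1 - x) powr \<alpha> * (1 + x) powr \<beta>"
proof -
  obtain L1 where L1: "((\<lambda>\<epsilon>::real. (complex_of_real (x-1) + of_real sg * \<i> * of_real \<epsilon>) powr (of_real (\<alpha>/2))) \<longlongrightarrow> L1) (at_right 0)"
    "cmod L1 = \<bar>x-1\<bar> powr (\<alpha>/2)" using powr_bv[of "x-1" sg "\<alpha>/2"] x sg by auto
  obtain L2 where L2: "((\<lambda>\<epsilon>::real. (complex_of_real (x+1) + of_real sg * \<i> * of_real \<epsilon>) powr (of_real (\<beta>/2))) \<longlongrightarrow> L2) (at_right 0)"
    "cmod L2 = \<bar>x+1\<bar> powr (\<beta>/2)" using powr_bv[of "x+1" sg "\<beta>/2"] x sg by auto
  have e1: "complex_of_real x + of_real sg * \<i> * of_real \<epsilon> - 1 = complex_of_real (x-1) + of_real sg * \<i> * of_real \<epsilon>" for \<epsilon>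
    by simp
  have e2: "complex_of_real x + of_real sg * \<i> * of_real \<epsilon> + 1 = complex_of_real (x+1) + of_real sg * \<i> * of_real \<epsilon>" for \<epsilon>
    by simp
  have "cmod (L1 * L2) ^ 2 = (1 - x) powr \<alpha> * (1 + x) powr \<beta>"
    using x by (simp add: norm_mult power_mult_distrib L1(2) L2(2) abs_if pow_half_sq) (simp add: add.commute)
  then show ?thesis using tendsto_mult[OF L1(1) L2(1)] unfolding e1 e2 by blast
qed

lemma pref_minus:
  fixes x sg \<alpha> \<beta> :: real
  assumes x: "x \<in> {-1<..<1}" and sg: "sg = 1 \<or> sg = -1"
  shows "\<exists>fL. ((\<lambda>\<epsilon>::real. (1 - (complex_of_real x + of_real sg * \<i> * of_real \<epsilon>)) powr of_real (\<alpha>/2) *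
              (- 1 - (complex_of_real x + of_real sg * \<i> * of_real \<epsilon>)) powr of_real (\<beta>/2)) \<longlongrightarrow> fL) (at_right 0)
        \<and> cmod fL ^ 2 = (1 - x) powr \<alpha> * (1 + x) powr \<beta>"
proof -
  have sg': "-sg = 1 \<or> -sg = -1" using sg by auto
  obtain L1 where L1: "((\<lambda>\<epsilon>::real. (complex_of_real (1-x) + of_real (-sg) * \<i> * of_real \<epsilon>) powr (of_real (\<alpha>/2))) \<longlongrightarrow> L1) (at_right 0)"
    "cmod L1 = \<bar>1-x\<bar> powr (\<alpha>/2)" using powr_bv[OF _ sg', of "1-x" "\<alpha>/2"] x by auto
  obtain L2 where L2: "((\<lambda>\<epsilon>::real. (complex_of_real (-1-x) + of_real (-sg) * \<i> * of_real \<epsilon>) powr (of_real (\<beta>/2))) \<longlongrightarrow> L2) (at_right 0)"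
    "cmod L2 = \<bar>-1-x\<bar> powr (\<beta>/2)" using powr_bv[OF _ sg', of "-1-x" "\<beta>/2"] x by auto
  have e1: "1 - (complex_of_real x + of_real sg * \<i> * of_real \<epsilon>) = complex_of_real (1-x) + of_real (-sg) * \<i> * of_real \<epsilon>" for \<epsilon>
    by simp
  have e2: "- 1 - (complex_of_real x + of_real sg * \<i> * of_real \<epsilon>) = complex_of_real (-1-x) + of_real (-sg) * \<i> * of_real \<epsilon>" for \<epsilon>
    by simp
  have "cmod (L1 * L2) ^ 2 = (1 - x) powr \<alpha> * (1 + x) powr \<beta>"
    using x by (simp add: norm_mult power_mult_distrib L1(2) L2(2) abs_if pow_half_sq) (simp add: add.commute)
  then show ?thesis using tendsto_mult[OF L1(1) L2(1)] unfolding e1 e2 by blast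
qed

lemma sq_from_side:
  fixes N R :: "complex set" and lam f :: "complex \<Rightarrow> complex" and c :: complex and sg :: real
  assumes N: "open N" "convex N" and lamh: "lam holomorphic_on N" and fh: "f holomorphic_on (N - R)"
    and R: "R \<subseteq> \<real>"
    and side: "\<exists>q \<rho>. \<rho> > 0 \<and> ball (complex_of_real q) \<rho> \<subseteq> N \<and> ball (complex_of_real q) \<rho> \<inter> R = {} \<and>
       (\<forall>y. complex_of_real y \<in> ball (complex_of_real q) \<rho> \<longrightarrow> f (of_real y) = csqrt (c * lam (of_real y)))"
    and sg: "sg = 1 \<or> sg = -1" and z: "z \<in> N" "0 < sg * Im z"
  shows "f z ^ 2 = c * lam z"
proof -
  obtain q \<rho> where q: "\<rho> > 0" "ball (complex_of_real q) \<rho> \<subseteq> N" "ball (complex_of_real q) \<rho> \<inter> R = {}"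
    "\<And>y. complex_of_real y \<in> ball (complex_of_real q) \<rho> \<Longrightarrow> f (of_real y) = csqrt (c * lam (of_real y))"
    using side by blast
  have g: "(\<lambda>z. f z ^ 2 - c * lam z) holomorphic_on (N - R)"
    using holomorphic_on_subset[OF lamh, of "N - R"] fh by (intro holomorphic_intros) auto
  have "f z ^ 2 - c * lam z = 0"
    by (rule ident_half[OF N g R q(1) q(2) q(3) _ sg z]) (simp add: q(4))
  then show ?thesis by simp
qed

theorem lemma1p6:
  fixes \<alpha> \<beta> :: real
    and H :: "real \<Rightarrow> complex^'n^'n"
    and N :: "complex set"
    and Q :: "complex \<Rightarrow> complex^'n^'n"
    and lam :: "'n \<Rightarrow> complex \<Rightarrow> complex"
    and s t :: "'n \<Rightarrow> complex \<Rightarrow> complex"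
  assumes \<alpha>: "\<alpha> > -1" and \<beta>: "\<beta> > -1"
    and H_pd: "\<forall>x\<in>{-1<..<1}. herm_pos_def (H x)"
    and H_analytic: "\<exists>U Hc. open U \<and> of_real ` {-1..1} \<subseteq> U \<and>
          (\<forall>i j. (\<lambda>z. Hc z $ i $ j) holomorphic_on U) \<and>
          (\<forall>x\<in>{-1..1}. Hc (of_real x) = H x)"
    and H_end: "H 1 \<noteq> 0" "H (-1) \<noteq> 0"
    and N: "open N" "convex N" "of_real ` {-1..1} \<subseteq> N"
    and Q_hol: "\<forall>i j. (\<lambda>z. Q z $ i $ j) holomorphic_on N"
    and lam_hol: "\<forall>j. lam j holomorphic_on N"
    and Q_unitary: "\<forall>x\<in>{-1..1}. unitary_mat (Q (of_real x))"
    and lam_real: "\<forall>j. \<forall>x\<in>{-1..1}. lam j (of_real x) \<in> \<real>"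
    and H_fact: "\<forall>x\<in>{-1..1}. H x = Q (of_real x) ** cdiag (\<lambda>j. lam j (of_real x)) ** mat_adj (Q (of_real x))"
    and lam_nz: "\<forall>j. \<forall>z\<in>N - {1, -1}. lam j z \<noteq> 0"
    and s_hol: "\<forall>j. s j holomorphic_on (N - {z. z \<in> \<real> \<and> Re z \<le> 1})"
    and s_pos: "\<forall>j. \<exists>\<delta>>0. \<forall>x\<in>{1<..<1+\<delta>}.
          s j (of_real x) = csqrt ((-1) ^ vanish_order (lam j) 1 * lam j (of_real x))"
    and t_hol: "\<forall>j. t j holomorphic_on (N - {z. z \<in> \<real> \<and> Re z \<ge> -1})"
    and t_pos: "\<forall>j. \<exists>\<delta>>0. \<forall>x\<in>{-1-\<delta><..<-1}.
          t j (of_real x) = csqrt ((-1) ^ vanish_order (lam j) (-1) * lam j (of_real x))"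
  shows "\<forall>x\<in>{-1<..<1}.
     (let Wx = ((1 - x) powr \<alpha> * (1 + x) powr \<beta>) *\<^sub>R H x in
        bv_factor (V_plus1 \<alpha> \<beta> Q s) (-1) x Wx \<and>
        bv_factor (V_plus1 \<alpha> \<beta> Q s) 1 x Wx \<and>
        bv_factor (V_minus1 \<alpha> \<beta> Q t) (-1) x Wx \<and>
        bv_factor (V_minus1 \<alpha> \<beta> Q t) 1 x Wx)"
proof (intro ballI)
  fix x :: real assume x: "x \<in> {-1<..<1}"
  have xI: "x \<in> {-1..1}" using x by auto
  have x0N: "complex_of_real x \<in> N" using N(3) xI by auto
  have oneN: "complex_of_real 1 \<in> N" using N(3) by auto
  have "complex_of_real (-1) \<in> complex_of_real ` {-1..1}" by (intro imageI) auto
  then have moneN: "complex_of_real (-1) \<in> N" using N(3) by blast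
  have lp: "\<And>j. lam j (of_real x) \<in> \<real> \<and> Re (lam j (of_real x)) > 0"
    using lam_pos[OF H_pd[rule_format, OF x] Q_unitary[rule_format, OF xI] H_fact[rule_format, OF xI]] by blast
  have Qc: "\<And>i j. isCont (\<lambda>z. Q z $ i $ j) (of_real x)"
    using Q_hol N(1) x0N by (meson continuous_on_eq_continuous_at holomorphic_on_imp_continuous_on)
  have lamc: "\<And>j. continuous_on N (lam j)"
    using lam_hol by (simp add: holomorphic_on_imp_continuous_on)
  have Rs: "{z. z \<in> \<real> \<and> Re z \<le> 1} \<subseteq> \<real>" and Rt: "{z. z \<in> \<real> \<and> Re z \<ge> -1} \<subseteq> \<real>" by auto
  have sL: "\<exists>L. ((\<lambda>\<epsilon>::real. s j (of_real x + of_real sg * \<i> * of_real \<epsilon>)) \<longlongrightarrow> L) (at_right 0)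
           \<and> (cmod L)^2 = Re (lam j (of_real x))" if sg: "sg = 1 \<or> sg = -1" for j sg
  proof -
    define c where "c = (-1::complex) ^ vanish_order (lam j) 1"
    obtain \<delta> where \<delta>: "\<delta> > 0" "\<forall>y\<in>{1<..<1+\<delta>}. s j (of_real y) = csqrt (c * lam j (of_real y))"
      using s_pos unfolding c_def by blast
    have side: "\<exists>q \<rho>. \<rho> > 0 \<and> ball (complex_of_real q) \<rho> \<subseteq> N \<and>
     ball (complex_of_real q) \<rho> \<inter> {z. z \<in> \<real> \<and> Re z \<le> 1} = {} \<and>
     (\<forall>y. complex_of_real y \<in> ball (complex_of_real q) \<rho> \<longrightarrow> s j (of_real y) = csqrt (c * lam j (of_real y)))"
      by (rule side_plus[OF N(1) oneN \<delta>])
    have sq: "\<And>z. z \<in> N \<Longrightarrow> 0 < sg * Im z \<Longrightarrow> s j z ^ 2 = c * lam j z"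
      using sq_from_side[OF N(1) N(2) lam_hol[rule_format] s_hol[rule_format] Rs side sg] by blast
    have sc: "continuous_on (N \<inter> {z. 0 < sg * Im z}) (s j)"
    proof (rule holomorphic_on_imp_continuous_on, rule holomorphic_on_subset[OF s_hol[rule_format]])
      show "N \<inter> {z. 0 < sg * Im z} \<subseteq> N - {z. z \<in> \<real> \<and> Re z \<le> 1}"
        by (auto simp: complex_is_Real_iff)
    qed
    have c1: "cmod c = 1" by (simp add: c_def norm_power)
    show ?thesis by (rule sqrt_bv[OF N(1) x0N lamc lp[THEN conjunct1] lp[THEN conjunct2] sc sq c1 sg])
  qed
  have tL: "\<exists>L. ((\<lambda>\<epsilon>::real. t j (of_real x + of_real sg * \<i> * of_real \<epsilon>)) \<longlongrightarrow> L) (at_right 0)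
           \<and> (cmod L)^2 = Re (lam j (of_real x))" if sg: "sg = 1 \<or> sg = -1" for j sg
  proof -
    define c where "c = (-1::complex) ^ vanish_order (lam j) (-1)"
    obtain \<delta> where \<delta>: "\<delta> > 0" "\<forall>y\<in>{-1-\<delta><..<-1}. t j (of_real y) = csqrt (c * lam j (of_real y))"
      using t_pos unfolding c_def by blast
    have side: "\<exists>q \<rho>. \<rho> > 0 \<and> ball (complex_of_real q) \<rho> \<subseteq> N \<and>
     ball (complex_of_real q) \<rho> \<inter> {z. z \<in> \<real> \<and> Re z \<ge> -1} = {} \<and>
     (\<forall>y. complex_of_real y \<in> ball (complex_of_real q) \<rho> \<longrightarrow> t j (of_real y) = csqrt (c * lam j (of_real y)))"
      by (rule side_minus[OF N(1) moneN \<delta>])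
    have sq: "\<And>z. z \<in> N \<Longrightarrow> 0 < sg * Im z \<Longrightarrow> t j z ^ 2 = c * lam j z"
      using sq_from_side[OF N(1) N(2) lam_hol[rule_format] t_hol[rule_format] Rt side sg] by blast
    have sc: "continuous_on (N \<inter> {z. 0 < sg * Im z}) (t j)"
    proof (rule holomorphic_on_imp_continuous_on, rule holomorphic_on_subset[OF t_hol[rule_format]])
      show "N \<inter> {z. 0 < sg * Im z} \<subseteq> N - {z. z \<in> \<real> \<and> Re z \<ge> -1}"
        by (auto simp: complex_is_Real_iff)
    qed
    have c1: "cmod c = 1" by (simp add: c_def norm_power)
    show ?thesis by (rule sqrt_bv[OF N(1) x0N lamc lp[THEN conjunct1] lp[THEN conjunct2] sc sq c1 sg])
  qed
  have Hx: "H x = Q (of_real x) ** cdiag (\<lambda>j. lam j (of_real x)) ** mat_adj (Q (of_real x))"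
    using H_fact xI by blast
  have plus: "bv_factor (V_plus1 \<alpha> \<beta> Q s) sg x (((1 - x) powr \<alpha> * (1 + x) powr \<beta>) *\<^sub>R H x)"
    if sg: "sg = 1 \<or> sg = -1" for sg
  proof -
    obtain fL where fL: "((\<lambda>\<epsilon>::real. (complex_of_real x + of_real sg * \<i> * of_real \<epsilon> - 1) powr of_real (\<alpha>/2) *
              (complex_of_real x + of_real sg * \<i> * of_real \<epsilon> + 1) powr of_real (\<beta>/2)) \<longlongrightarrow> fL) (at_right 0)"
        "cmod fL ^ 2 = (1 - x) powr \<alpha> * (1 + x) powr \<beta>"
      using pref_plus[OF x sg] by blast
    obtain sLf where sLf: "\<And>j. ((\<lambda>\<epsilon>::real. s j (of_real x + of_real sg * \<i> * of_real \<epsilon>)) \<longlongrightarrow> sLf j) (at_right 0)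
           \<and> (cmod (sLf j))^2 = Re (lam j (of_real x))"
      using sL[OF sg] by metis
    show ?thesis
      by (rule bv_generic[where f = "\<lambda>z. (z - 1) powr of_real (\<alpha>/2) * (z + 1) powr of_real (\<beta>/2)"
            and sf = s and sL = sLf and d = "\<lambda>j. lam j (of_real x)", OF _ fL(1) fL(2) sLf[THEN conjunct1] _ Qc Hx])
        (use sLf lp in \<open>auto simp: V_plus1_def\<close>)
  qed
  have minus: "bv_factor (V_minus1 \<alpha> \<beta> Q t) sg x (((1 - x) powr \<alpha> * (1 + x) powr \<beta>) *\<^sub>R H x)"
    if sg: "sg = 1 \<or> sg = -1" for sg
  proof -
    obtain fL where fL: "((\<lambda>\<epsilon>::real. (1 - (complex_of_real x + of_real sg * \<i> * of_real \<epsilon>)) powr of_real (\<alpha>/2) *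
              (- 1 - (complex_of_real x + of_real sg * \<i> * of_real \<epsilon>)) powr of_real (\<beta>/2)) \<longlongrightarrow> fL) (at_right 0)"
        "cmod fL ^ 2 = (1 - x) powr \<alpha> * (1 + x) powr \<beta>"
      using pref_minus[OF x sg] by blast
    obtain sLf where sLf: "\<And>j. ((\<lambda>\<epsilon>::real. t j (of_real x + of_real sg * \<i> * of_real \<epsilon>)) \<longlongrightarrow> sLf j) (at_right 0)
           \<and> (cmod (sLf j))^2 = Re (lam j (of_real x))"
      using tL[OF sg] by metis
    show ?thesis
      by (rule bv_generic[where f = "\<lambda>z. (1 - z) powr of_real (\<alpha>/2) * (- 1 - z) powr of_real (\<beta>/2)"
            and sf = t and sL = sLf and d = "\<lambda>j. lam j (of_real x)", OF _ fL(1) fL(2) sLf[THEN conjunct1] _ Qc Hx])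
        (use sLf lp in \<open>auto simp: V_minus1_def\<close>)
  qed
  show "let Wx = ((1 - x) powr \<alpha> * (1 + x) powr \<beta>) *\<^sub>R H x in
        bv_factor (V_plus1 \<alpha> \<beta> Q s) (-1) x Wx \<and>
        bv_factor (V_plus1 \<alpha> \<beta> Q s) 1 x Wx \<and>
        bv_factor (V_minus1 \<alpha> \<beta> Q t) (-1) x Wx \<and>
        bv_factor (V_minus1 \<alpha> \<beta> Q t) 1 x Wx"
    unfolding Let_def using plus[of 1] plus[of "-1"] minus[of 1] minus[of "-1"] by simp
qed

end
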